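(* Let $\mathrm{ALG}$ be any bandit algorithm and fix a round $t$. Suppose that the algorithm which runs $\mathrm{ALG}$ for $t-1$ rounds and then Thompson sampling at round $t$ is BIC at round $t$. Then the algorithm which runs $\mathrm{ALG}$ for $t$ rounds and then Thompson sampling at round $t+1$ is BIC at round $t+1$.
   Context: Incentivized exploration model: $K$ arms; mean rewards $\mu_1,\dots,\mu_K\in[0,1]$ drawn independently, $\mu_i\sim\mathcal P_i$ with known priors; Bernoulli rewards: given the means, each arm $i$ has an i.i.d. sequence of $\{0,1\}$ samples with mean $\mu_i$, the $n$-th choice of arm $i$ reveals its $n$-th sample. In each round $s$ the algorithm recommends $A_s$, the agent chooses $A'_s$, and the reward is observed by the algorithm. With $\mathcal E_{s-1}=\{A'_r=A_r\ \forall r<s\}$, an algorithm is BIC at round $s$ if for all arms $i,j$ with $\Pr[A_s=i]>0$, $\mathbb E[\mu_i-\mu_j\mid A_s=i,\mathcal E_{s-1}]\geq0$ (agents are assumed to have followed the recommendations in earlier rounds). $A^*=\min(\arg\max_j\mu_j)$; $\mathcal F_s$ is the $\sigma$-algebra of chosen arms and rewards before round $s$. Thompson sampling at round $s$ recommends $A_s$ with $\Pr[A_s=i\mid\mathcal F_s]=\Pr[A^*=i\mid\mathcal F_s]$. *)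

theory Defs
  imports "HOL-Probability.Probability"
begin

text \<open>Arms are 0,...,K-1. A history (of chosen arms and observed rewards, oldest first)
is a list of pairs (arm, reward) with reward True = 1, False = 0.
A (randomized) bandit algorithm maps the history so far to a distribution over arms.
Agents are assumed to follow the recommendations, so the recommended arm is the chosen arm.\<close>

type_synonym history = "(nat \<times> bool) list"
type_synonym algorithm = "history \<Rightarrow> nat pmf"

definition valid_alg :: "nat \<Rightarrow> algorithm \<Rightarrow> bool" where
  "valid_alg K ALG \<longleftrightarrow> (\<forall>h. set_pmf (ALG h) \<subseteq> {..<K})"

definition valid_priors :: "nat \<Rightarrow> (nat \<Rightarrow> real measure) \<Rightarrow> bool" where
  "valid_priors K P \<longleftrightarrow> (\<forall>i<K. prob_space (P i) \<and> sets (P i) = sets borel \<and> measure (P i) {0..1} = 1)"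

definition prior :: "nat \<Rightarrow> (nat \<Rightarrow> real measure) \<Rightarrow> (nat \<Rightarrow> real) measure" where
  "prior K P = PiM {..<K} P"

definition histories :: "nat \<Rightarrow> nat \<Rightarrow> history set" where
  "histories K n = {h. length h = n \<and> fst ` set h \<subseteq> {..<K}}"

definition alg_prob :: "algorithm \<Rightarrow> history \<Rightarrow> real" where
  "alg_prob ALG h = (\<Prod>r<length h. pmf (ALG (take r h)) (fst (h ! r)))"

text \<open>Likelihood of the rewards in h given the mean vector mu (Bernoulli rewards; the n-th pull
of an arm reveals the n-th i.i.d. sample of that arm).\<close>
definition lik :: "(nat \<Rightarrow> real) \<Rightarrow> history \<Rightarrow> real" where
  "lik mu h = (\<Prod>r<length h. if snd (h ! r) then mu (fst (h ! r)) else 1 - mu (fst (h ! r)))"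

definition best_arm :: "nat \<Rightarrow> (nat \<Rightarrow> real) \<Rightarrow> nat" where
  "best_arm K mu = (LEAST i. i < K \<and> (\<forall>j<K. mu j \<le> mu i))"

text \<open>Thompson sampling: probability of recommending arm i after history h,
equal to the posterior probability Pr[A* = i | history = h].\<close>
definition ts_prob :: "nat \<Rightarrow> (nat \<Rightarrow> real measure) \<Rightarrow> history \<Rightarrow> nat \<Rightarrow> real" where
  "ts_prob K P h i =
     (\<integral>mu. indicator {mu. best_arm K mu = i} mu * lik mu h \<partial>prior K P) /
     (\<integral>mu. lik mu h \<partial>prior K P)"

text \<open>For the algorithm that runs ALG for n rounds and then Thompson sampling at round n+1:
E[ f(mu) * 1{A_(n+1) = i} ].\<close>
definition ts_after_joint ::
  "nat \<Rightarrow> (nat \<Rightarrow> real measure) \<Rightarrow> algorithm \<Rightarrow> nat \<Rightarrow> ((nat \<Rightarrow> real) \<Rightarrow> real) \<Rightarrow> nat \<Rightarrow> real" where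
  "ts_after_joint K P ALG n f i =
     (\<Sum>h\<in>histories K n. \<integral>mu. f mu * alg_prob ALG h * lik mu h * ts_prob K P h i \<partial>prior K P)"

text \<open>BIC at round n+1 of the algorithm running ALG for n rounds then Thompson sampling:
for all arms i, j with Pr[A_(n+1) = i] > 0, E[mu_i - mu_j | A_(n+1) = i] >= 0.\<close>
definition bic_ts_after :: "nat \<Rightarrow> (nat \<Rightarrow> real measure) \<Rightarrow> algorithm \<Rightarrow> nat \<Rightarrow> bool" where
  "bic_ts_after K P ALG n \<longleftrightarrow>
     (\<forall>i<K. \<forall>j<K. ts_after_joint K P ALG n (\<lambda>_. 1) i > 0 \<longrightarrow>
        ts_after_joint K P ALG n (\<lambda>mu. mu i - mu j) i / ts_after_joint K P ALG n (\<lambda>_. 1) i \<ge> 0)"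

end

theory Submission
  imports Defs
begin

lemma histories_finite: "finite (histories K n)"
proof -
  have "histories K n = {xs. set xs \<subseteq> {..<K} \<times> UNIV \<and> length xs = n}"
    unfolding histories_def by force
  moreover have "finite ({..<K} \<times> (UNIV::bool set))" by simp
  ultimately show ?thesis using finite_lists_length_eq by metis
qed

lemma histories_Suc:
  "histories K (Suc n) = (\<lambda>(h, a, r). h @ [(a, r)]) ` (histories K n \<times> {..<K} \<times> UNIV)"
proof (intro set_eqI iffI)
  fix x assume x: "x \<in> histories K (Suc n)"
  then obtain h p where "x = h @ [p]" unfolding histories_def
    by (metis (mono_tags, lifting) length_Suc_conv_rev mem_Collect_eq)
  with x show "x \<in> (\<lambda>(h, a, r). h @ [(a, r)]) ` (histories K n \<times> {..<K} \<times> UNIV)"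
    unfolding histories_def by (cases p) (auto intro!: image_eqI[where x="(h, fst p, snd p)"])
qed (force simp: histories_def)

lemma sum_histories_Suc:
  "(\<Sum>h'\<in>histories K (Suc n). F h') =
   (\<Sum>h\<in>histories K n. \<Sum>a<K. F (h @ [(a, True)]) + F (h @ [(a, False)]))"
proof -
  have inj: "inj_on (\<lambda>(h, a, r). h @ [(a, r)]) (histories K n \<times> {..<K} \<times> (UNIV::bool set))"
    by (auto simp: inj_on_def)
  have "(\<Sum>h'\<in>histories K (Suc n). F h') =
        (\<Sum>x\<in>histories K n \<times> {..<K} \<times> (UNIV::bool set). F ((\<lambda>(h, a, r). h @ [(a, r)]) x))"
    unfolding histories_Suc by (subst sum.reindex[OF inj]) (simp add: comp_def)
  also have "\<dots> = (\<Sum>h\<in>histories K n. \<Sum>x\<in>{..<K} \<times> (UNIV::bool set). F (h @ [(fst x, snd x)]))"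
    by (simp add: sum.cartesian_product split_def)
  also have "\<dots> = (\<Sum>h\<in>histories K n. \<Sum>a<K. \<Sum>r\<in>(UNIV::bool set). F (h @ [(a, r)]))"
    by (simp add: sum.cartesian_product split_def)
  also have "\<dots> = (\<Sum>h\<in>histories K n. \<Sum>a<K. F (h @ [(a, True)]) + F (h @ [(a, False)]))"
    by (simp add: UNIV_bool add.commute)
  finally show ?thesis .
qed

lemma alg_prob_snoc: "alg_prob ALG (h @ [(a, r)]) = alg_prob ALG h * pmf (ALG h) a"
  unfolding alg_prob_def by (simp add: nth_append)

lemma lik_snoc: "lik mu (h @ [(a, r)]) = lik mu h * (if r then mu a else 1 - mu a)"
proof -
  have "(\<Prod>q<length h. if snd ((h @ [(a, r)]) ! q) then mu (fst ((h @ [(a, r)]) ! q)) else 1 - mu (fst ((h @ [(a, r)]) ! q)))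
      = (\<Prod>q<length h. if snd (h ! q) then mu (fst (h ! q)) else 1 - mu (fst (h ! q)))"
    by (rule prod.cong) (auto simp: nth_append)
  then show ?thesis unfolding lik_def by simp
qed

lemma best_arm_iff:
  assumes "i < K"
  shows "best_arm K mu = i \<longleftrightarrow> (\<forall>j<K. mu j \<le> mu i) \<and> (\<forall>j<i. mu j < mu i)"
proof
  assume b: "best_arm K mu = i"
  obtain m where m: "m < K" "\<forall>j<K. mu j \<le> mu m"
  proof -
    have "finite (mu ` {..<K})" "mu ` {..<K} \<noteq> {}" using assms by auto
    then have "Max (mu ` {..<K}) \<in> mu ` {..<K}" by (rule Max_in)
    then obtain m where "m < K" "mu m = Max (mu ` {..<K})" by auto
    then show ?thesis using that[of m] by auto
  qed
  have P: "i < K \<and> (\<forall>j<K. mu j \<le> mu i)"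
    using LeastI[of "\<lambda>i. i < K \<and> (\<forall>j<K. mu j \<le> mu i)" m] m b unfolding best_arm_def by auto
  moreover have "\<forall>j<i. mu j < mu i"
  proof (intro allI impI)
    fix j assume "j < i"
    then have "\<not> (j < K \<and> (\<forall>j'<K. mu j' \<le> mu j))"
      using not_less_Least[of j "\<lambda>i. i < K \<and> (\<forall>j<K. mu j \<le> mu i)"] b unfolding best_arm_def by auto
    then show "mu j < mu i" using P \<open>j < i\<close> by force
  qed
  ultimately show "(\<forall>j<K. mu j \<le> mu i) \<and> (\<forall>j<i. mu j < mu i)" by auto
next
  assume h: "(\<forall>j<K. mu j \<le> mu i) \<and> (\<forall>j<i. mu j < mu i)"
  show "best_arm K mu = i" unfolding best_arm_def
  proof (rule Least_equality)
    show "i < K \<and> (\<forall>j<K. mu j \<le> mu i)" using h assms by auto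
    fix y assume "y < K \<and> (\<forall>j<K. mu j \<le> mu y)"
    then show "i \<le> y" using h assms by (meson leD not_le_imp_less)
  qed
qed


lemma prior_prob: "valid_priors K P \<Longrightarrow> prob_space (prior K P)"
  unfolding prior_def valid_priors_def by (intro prob_space_PiM) auto

lemma prior_comp_meas:
  assumes "valid_priors K P" "k < K"
  shows "(\<lambda>mu. mu k) \<in> borel_measurable (prior K P)"
proof -
  have "(\<lambda>mu. mu k) \<in> measurable (prior K P) (P k)"
    unfolding prior_def using assms(2) by (intro measurable_component_singleton) auto
  moreover have "sets (P k) = sets borel" using assms unfolding valid_priors_def by auto
  ultimately show ?thesis using measurable_cong_sets[OF refl] by metis
qed

lemma AE_P01:
  assumes "valid_priors K P" "k < K"
  shows "AE x in P k. x \<in> {0..1}"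
proof -
  interpret prob_space "P k" using assms unfolding valid_priors_def by auto
  show ?thesis using assms unfolding valid_priors_def by (intro AE_prob_1) auto
qed

lemma AE_prior01:
  assumes "valid_priors K P"
  shows "AE mu in prior K P. \<forall>k<K. mu k \<in> {0..1}"
proof -
  have "AE mu in prior K P. \<forall>k\<in>{..<K}. mu k \<in> {0..1}"
    unfolding prior_def
    apply (rule eventually_ball_finite)
     apply simp
    apply (rule ballI)
    apply (rule AE_PiM_component)
    using assms AE_P01[OF assms] unfolding valid_priors_def by auto
  then show ?thesis by auto
qed

lemma lik_meas:
  assumes "valid_priors K P" "h \<in> histories K n"
  shows "(\<lambda>mu. lik mu h) \<in> borel_measurable (prior K P)"
proof -
  have k: "\<And>r. r < length h \<Longrightarrow> fst (h ! r) < K"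
    using assms(2) unfolding histories_def by (force dest: nth_mem)
  show ?thesis unfolding lik_def
    apply (intro borel_measurable_prod)
    using prior_comp_meas[OF assms(1) k] by auto
qed

lemma lik_bounds:
  assumes "\<forall>k<K. mu k \<in> {0..1}" "h \<in> histories K n"
  shows "0 \<le> lik mu h \<and> lik mu h \<le> 1"
proof -
  have k: "\<And>r. r < length h \<Longrightarrow> fst (h ! r) < K"
    using assms(2) unfolding histories_def by (force dest: nth_mem)
  have b: "\<And>r. r < length h \<Longrightarrow> 0 \<le> (if snd (h ! r) then mu (fst (h ! r)) else 1 - mu (fst (h ! r)))
     \<and> (if snd (h ! r) then mu (fst (h ! r)) else 1 - mu (fst (h ! r))) \<le> 1"
    using assms(1) k by auto
  show ?thesis unfolding lik_def
    by (intro conjI prod_nonneg prod_le_1) (use b in auto)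
qed

lemma ind_meas:
  assumes "valid_priors K P" "i < K"
  shows "(\<lambda>mu. indicator {mu. best_arm K mu = i} mu :: real) \<in> borel_measurable (prior K P)"
proof -
  let ?M = "prior K P"
  have m: "\<And>k. k < K \<Longrightarrow> (\<lambda>mu. mu k) \<in> borel_measurable (prior K P)"
    using prior_comp_meas[OF assms(1)] by auto
  have eq: "{mu. best_arm K mu = i} \<inter> space ?M =
    (\<Inter>j\<in>{..<K}. {mu \<in> space ?M. mu j \<le> mu i \<and> (j < i \<longrightarrow> mu j < mu i)})"
  proof (intro set_eqI iffI)
    fix mu assume "mu \<in> {mu. best_arm K mu = i} \<inter> space ?M"
    then show "mu \<in> (\<Inter>j\<in>{..<K}. {mu \<in> space ?M. mu j \<le> mu i \<and> (j < i \<longrightarrow> mu j < mu i)})"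
      using best_arm_iff[OF assms(2), of mu] by simp
  next
    fix mu assume a: "mu \<in> (\<Inter>j\<in>{..<K}. {mu \<in> space ?M. mu j \<le> mu i \<and> (j < i \<longrightarrow> mu j < mu i)})"
    then have "mu \<in> space ?M" using assms(2) by blast
    moreover have "(\<forall>j<K. mu j \<le> mu i) \<and> (\<forall>j<i. mu j < mu i)"
      using a assms(2) by auto
    ultimately show "mu \<in> {mu. best_arm K mu = i} \<inter> space ?M"
      using best_arm_iff[OF assms(2), of mu] by simp
  qed
  have s: "{mu \<in> space ?M. mu j \<le> mu i \<and> (j < i \<longrightarrow> mu j < mu i)} \<in> sets ?M" if "j < K" for j
  proof (cases "j < i")
    case True
    have "{mu \<in> space ?M. mu j \<le> mu i \<and> (j < i \<longrightarrow> mu j < mu i)} =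
      {mu \<in> space ?M. mu j \<le> mu i} \<inter> {mu \<in> space ?M. mu j < mu i}" using True by auto
    moreover have "{mu \<in> space ?M. mu j \<le> mu i} \<in> sets ?M"
      using m[OF that] m[OF assms(2)] by (rule borel_measurable_le)
    moreover have "{mu \<in> space ?M. mu j < mu i} \<in> sets ?M"
      using m[OF that] m[OF assms(2)] by (rule borel_measurable_less)
    ultimately show ?thesis by simp
  next
    case False
    then have "{mu \<in> space ?M. mu j \<le> mu i \<and> (j < i \<longrightarrow> mu j < mu i)} = {mu \<in> space ?M. mu j \<le> mu i}" by auto
    moreover have "{mu \<in> space ?M. mu j \<le> mu i} \<in> sets ?M"
      using m[OF that] m[OF assms(2)] by (rule borel_measurable_le)
    ultimately show ?thesis by simp
  qed
  have "{mu. best_arm K mu = i} \<inter> space ?M \<in> sets ?M"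
    unfolding eq using s assms(2) by (intro sets.finite_INT) auto
  then show ?thesis by (subst borel_measurable_indicator_iff) 
qed


lemma int_bdd01:
  fixes Q :: "real measure"
  assumes "prob_space Q" "AE x in Q. x \<in> {0..1}" "f \<in> borel_measurable Q"
    "\<And>x. x \<in> {0..1} \<Longrightarrow> \<bar>f x\<bar> \<le> C"
  shows "integrable Q (f :: real \<Rightarrow> real)"
proof -
  interpret prob_space Q by fact
  show ?thesis
    apply (rule integrable_const_bound[where B=C])
    using assms(2) apply (rule AE_mp) using assms(4) apply auto[1]
    by fact
qed

lemma cheb:
  fixes Q :: "real measure" and g psi :: "real \<Rightarrow> real"
  assumes Q: "prob_space Q" and ae: "AE x in Q. x \<in> {0..1}"
   and gm: "g \<in> borel_measurable Q" and pm: "psi \<in> borel_measurable Q"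
   and xm: "(\<lambda>x. x) \<in> borel_measurable Q"
   and gb: "\<And>x. x \<in> {0..1} \<Longrightarrow> 0 \<le> g x \<and> g x \<le> 1"
   and pb: "\<And>x. x \<in> {0..1} \<Longrightarrow> \<bar>psi x\<bar> \<le> B"
   and mono: "\<And>x x'. 0 \<le> x \<Longrightarrow> x \<le> x' \<Longrightarrow> x' \<le> 1 \<Longrightarrow> psi x \<le> psi x'"
  shows "0 \<le> (\<integral>x. psi x * g x * x \<partial>Q) * (\<integral>x. g x * (1 - x) \<partial>Q)
            - (\<integral>x. psi x * g x * (1 - x) \<partial>Q) * (\<integral>x. g x * x \<partial>Q)"
proof -
  have B0: "0 \<le> B" using pb[of 0] by auto
  have gxb: "\<And>x. x \<in> {0..1} \<Longrightarrow> 0 \<le> g x * x \<and> g x * x \<le> g x"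
    using gb by (auto simp: mult_left_le)
  have ig: "integrable Q g"
    by (rule int_bdd01[OF Q ae gm, of 1]) (use gb in auto)
  have igx: "integrable Q (\<lambda>x. g x * x)"
    by (rule int_bdd01[OF Q ae _, of _ 1]) (use gm xm gxb gb in \<open>auto intro: order_trans\<close>)
  have ipg: "integrable Q (\<lambda>x. psi x * g x)"
  proof (rule int_bdd01[OF Q ae _, of _ B])
    fix x :: real assume x: "x \<in> {0..1}"
    have "\<bar>psi x * g x\<bar> = \<bar>psi x\<bar> * g x" using gb[OF x] by (simp add: abs_mult)
    also have "\<dots> \<le> B * 1" using gb[OF x] pb[OF x] B0 by (intro mult_mono) auto
    finally show "\<bar>psi x * g x\<bar> \<le> B" by simp
  qed (use gm pm in auto)
  have ipgx: "integrable Q (\<lambda>x. psi x * g x * x)"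
  proof (rule int_bdd01[OF Q ae _, of _ B])
    fix x :: real assume x: "x \<in> {0..1}"
    have "\<bar>psi x * g x * x\<bar> = \<bar>psi x\<bar> * (g x * x)" using gb[OF x] x by (simp add: abs_mult)
    also have "\<dots> \<le> B * 1" using gxb[OF x] gb[OF x] pb[OF x] B0 by (intro mult_mono) auto
    finally show "\<bar>psi x * g x * x\<bar> \<le> B" by simp
  qed (use gm pm xm in auto)
  define M where "M = (\<integral>x. g x \<partial>Q)"
  define S where "S = (\<integral>x. g x * x \<partial>Q)"
  define A where "A = (\<integral>x. psi x * g x * x \<partial>Q)"
  define C where "C = (\<integral>x. psi x * g x \<partial>Q)"
  have e1: "(\<integral>x. g x * (1 - x) \<partial>Q) = M - S"
    unfolding M_def S_def using ig igx by (simp add: algebra_simps)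
  have e2: "(\<integral>x. psi x * g x * (1 - x) \<partial>Q) = C - A"
    unfolding C_def A_def using ipg ipgx by (simp add: algebra_simps)
  have S0: "0 \<le> S" unfolding S_def
    by (rule integral_nonneg_AE) (use ae gxb in \<open>auto elim: AE_mp\<close>)
  have SM: "S \<le> M" unfolding S_def M_def
    by (rule integral_mono_AE[OF igx ig]) (use ae gxb in \<open>auto elim: AE_mp\<close>)
  have "0 \<le> A * M - C * S"
  proof (cases "M = 0")
    case True
    then have "S = 0" using S0 SM by auto
    then show ?thesis using True by simp
  next
    case False
    then have Mp: "0 < M" using S0 SM by auto
    define m where "m = S / M"
    have m01: "0 \<le> m" "m \<le> 1" unfolding m_def using Mp S0 SM by auto
    have nn: "0 \<le> (\<integral>x. g x * ((x - m) * (psi x - psi m)) \<partial>Q)"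
    proof (rule integral_nonneg_AE)
      show "AE x in Q. 0 \<le> g x * ((x - m) * (psi x - psi m))"
        using ae
      proof (rule AE_mp, intro AE_I2 impI)
        fix x :: real assume x: "x \<in> {0..1}"
        have "0 \<le> (x - m) * (psi x - psi m)"
        proof (cases "x \<le> m")
          case True
          then have "psi x \<le> psi m" using mono[of x m] x m01 by auto
          then show ?thesis using True by (intro mult_nonpos_nonpos) auto
        next
          case False
          then have "psi m \<le> psi x" using mono[of m x] x m01 by auto
          then show ?thesis using False by auto
        qed
        then show "0 \<le> g x * ((x - m) * (psi x - psi m))" using gb[OF x] by auto
      qed
    qed
    have "(\<integral>x. g x * ((x - m) * (psi x - psi m)) \<partial>Q) =
          (\<integral>x. (psi x * g x * x - m * (psi x * g x)) - (psi m * (g x * x) - (m * psi m) * g x) \<partial>Q)"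
      by (rule Bochner_Integration.integral_cong) (auto simp: algebra_simps)
    also have "\<dots> = A - m * C - (psi m * S - m * psi m * M)"
      unfolding A_def C_def S_def M_def using ig igx ipg ipgx by simp
    also have "\<dots> = A - m * C" unfolding m_def using Mp by simp
    finally have "0 \<le> A - m * C" using nn by simp
    then have "0 \<le> M * (A - m * C)" using Mp by simp
    also have "M * (A - m * C) = A * M - C * S" unfolding m_def using Mp by (simp add: algebra_simps)
    finally show ?thesis .
  qed
  then show ?thesis unfolding e1 e2 A_def[symmetric] S_def[symmetric] by (simp add: algebra_simps)
qed


lemma cov_mono:
  fixes F :: "(nat \<Rightarrow> real) \<Rightarrow> real"
  assumes vp: "valid_priors K P" and aK: "a < K" and hH: "h \<in> histories K n"
    and Fm: "F \<in> borel_measurable (prior K P)"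
    and Fb: "\<And>mu. \<forall>k<K. mu k \<in> {0..1} \<Longrightarrow> \<bar>F mu\<bar> \<le> 1"
    and Fmono: "\<And>mu x x'. 0 \<le> x \<Longrightarrow> x \<le> x' \<Longrightarrow> x' \<le> 1 \<Longrightarrow> F (mu(a := x)) \<le> F (mu(a := x'))"
  shows "0 \<le> (\<integral>mu. F mu * lik mu (h @ [(a, True)]) \<partial>prior K P) * (\<integral>mu. lik mu (h @ [(a, False)]) \<partial>prior K P)
           - (\<integral>mu. F mu * lik mu (h @ [(a, False)]) \<partial>prior K P) * (\<integral>mu. lik mu (h @ [(a, True)]) \<partial>prior K P)"
proof -
  define P' where "P' = (\<lambda>k. if k < K then P k else return borel (0::real))"
  define I' where "I' = {..<K} - {a}"
  have P'prob: "\<And>k. prob_space (P' k)"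
    using vp unfolding P'_def valid_priors_def by (auto intro: prob_space_return)
  have P'sets: "\<And>k. sets (P' k) = sets borel"
    using vp unfolding P'_def valid_priors_def by auto
  have P'a: "P' a = P a" unfolding P'_def using aK by simp
  interpret PS: product_sigma_finite P'
    unfolding product_sigma_finite_def using P'prob prob_space_imp_sigma_finite by blast
  interpret Pa: prob_space "P a" using vp aK unfolding valid_priors_def by auto
  have pi_eq: "prior K P = PiM (insert a I') P'"
    unfolding prior_def I'_def P'_def using aK by (intro PiM_cong) auto
  have aI: "a \<notin> I'" and finI: "finite I'" unfolding I'_def by auto
  let ?pi = "prior K P"
  let ?pi' = "PiM I' P'"
  have piprob: "prob_space ?pi" by (rule prior_prob[OF vp])
  interpret pi': prob_space ?pi' by (intro prob_space_PiM P'prob)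
  have xmeas: "(\<lambda>x. x) \<in> borel_measurable (P a)"
    using vp aK unfolding valid_priors_def by (intro measurable_ident_sets) auto
  have aeP: "AE x in P a. x \<in> {0..1}" by (rule AE_P01[OF vp aK])
  have aepi': "AE y in ?pi'. \<forall>k\<in>I'. y k \<in> {0..1}"
  proof (rule eventually_ball_finite[OF finI], rule ballI)
    fix k assume k: "k \<in> I'"
    then have kK: "k < K" unfolding I'_def by auto
    then have Pk: "P' k = P k" unfolding P'_def by auto
    have "AE x in P' k. x \<in> {0..1}" unfolding Pk by (rule AE_P01[OF vp kK])
    then show "AE y in ?pi'. y k \<in> {0..1}"
      by (rule AE_PiM_component[of I' P' k "\<lambda>x. x \<in> {0..1}", OF P'prob k])
  qed
  have aepi: "AE mu in ?pi. \<forall>k<K. mu k \<in> {0..1}" by (rule AE_prior01[OF vp])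
  have hK: "\<And>r. r < length h \<Longrightarrow> fst (h ! r) < K"
    using hH unfolding histories_def by (force dest: nth_mem)
  define c where "c = (\<lambda>r (v::real). if snd (h ! r) then v else 1 - v)"
  define Ra where "Ra = {r \<in> {..<length h}. fst (h ! r) = a}"
  define Gam where "Gam = (\<lambda>x. \<Prod>r\<in>Ra. c r x)"
  define G where "G = (\<lambda>y::nat \<Rightarrow> real. \<Prod>r\<in>{..<length h} - Ra. c r (y (fst (h ! r))))"
  have fac: "lik (y(a := x)) h = Gam x * G y" for y :: "nat \<Rightarrow> real" and x :: real
  proof -
    have "lik (y(a := x)) h = (\<Prod>r<length h. c r ((y(a := x)) (fst (h ! r))))"
      unfolding lik_def c_def by simp
    also have "\<dots> = (\<Prod>r\<in>{..<length h} \<inter> Ra. c r ((y(a := x)) (fst (h ! r)))) *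
                     (\<Prod>r\<in>{..<length h} - Ra. c r ((y(a := x)) (fst (h ! r))))"
      by (rule prod.Int_Diff) simp
    also have "(\<Prod>r\<in>{..<length h} \<inter> Ra. c r ((y(a := x)) (fst (h ! r)))) = Gam x"
      unfolding Gam_def by (rule prod.cong) (auto simp: Ra_def)
    also have "(\<Prod>r\<in>{..<length h} - Ra. c r ((y(a := x)) (fst (h ! r)))) = G y"
      unfolding G_def by (rule prod.cong) (auto simp: Ra_def)
    finally show ?thesis .
  qed
  define b where "b = (\<lambda>(r::bool) (x::real). if r then x else 1 - x)"
  have fac2: "lik (y(a := x)) (h @ [(a, r)]) = Gam x * G y * b r x" for y :: "nat \<Rightarrow> real" and x :: real and r
    unfolding lik_snoc fac b_def by simp
  have cb: "\<And>r v. v \<in> {0..1} \<Longrightarrow> 0 \<le> c r v \<and> c r v \<le> 1" unfolding c_def by auto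
  have Gamb: "\<And>x. x \<in> {0..1} \<Longrightarrow> 0 \<le> Gam x \<and> Gam x \<le> 1"
    unfolding Gam_def using cb by (intro conjI prod_nonneg prod_le_1) auto
  have Gb: "\<And>y. \<forall>k\<in>I'. y k \<in> {0..1} \<Longrightarrow> 0 \<le> G y \<and> G y \<le> 1"
  proof -
    fix y :: "nat \<Rightarrow> real" assume y: "\<forall>k\<in>I'. y k \<in> {0..1}"
    have "\<And>r. r \<in> {..<length h} - Ra \<Longrightarrow> y (fst (h ! r)) \<in> {0..1}"
      using y hK unfolding Ra_def I'_def by auto
    then show "0 \<le> G y \<and> G y \<le> 1"
      unfolding G_def using cb by (intro conjI prod_nonneg prod_le_1) auto
  qed
  have Gamm: "Gam \<in> borel_measurable (P a)"
    unfolding Gam_def c_def using xmeas by (intro borel_measurable_prod) auto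
  have Gm: "G \<in> borel_measurable ?pi'"
    unfolding G_def c_def
  proof (intro borel_measurable_prod)
    fix r assume r: "r \<in> {..<length h} - Ra"
    then have k: "fst (h ! r) \<in> I'" using hK unfolding Ra_def I'_def by auto
    have "(\<lambda>y. y (fst (h ! r))) \<in> measurable ?pi' (P' (fst (h ! r)))"
      using k by (rule measurable_component_singleton)
    then have "(\<lambda>y. y (fst (h ! r))) \<in> borel_measurable ?pi'"
      using measurable_cong_sets[OF refl P'sets] by metis
    then show "(\<lambda>y. if snd (h ! r) then y (fst (h ! r)) else 1 - y (fst (h ! r))) \<in> borel_measurable ?pi'"
      by auto
  qed
  have hr: "h @ [(a, r)] \<in> histories K (Suc n)" for r using hH aK unfolding histories_def by auto
  have likm: "(\<lambda>mu. lik mu (h @ [(a, r)])) \<in> borel_measurable ?pi" for r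
    by (rule lik_meas[OF vp hr])
  have likb: "AE mu in ?pi. 0 \<le> lik mu (h @ [(a, r)]) \<and> lik mu (h @ [(a, r)]) \<le> 1" for r
    using aepi by (rule AE_mp) (use lik_bounds[OF _ hr] in auto)
  interpret pi: prob_space ?pi by (rule piprob)
  have intlik: "integrable ?pi (\<lambda>mu. lik mu (h @ [(a, r)]))" for r
    by (rule pi.integrable_const_bound[where B=1]) (use likb[of r] likm[of r] in \<open>auto elim: AE_mp\<close>)
  have intFlik: "integrable ?pi (\<lambda>mu. F mu * lik mu (h @ [(a, r)]))" for r
  proof (rule pi.integrable_const_bound[where B=1])
    show "AE mu in ?pi. norm (F mu * lik mu (h @ [(a, r)])) \<le> 1"
      using aepi likb[of r]
    proof (eventually_elim)
      case (elim mu)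
      then show ?case using Fb[of mu] by (auto simp: abs_mult intro: mult_le_one)
    qed
  qed (use Fm likm in auto)
  define cG where "cG = (\<integral>y. G y \<partial>?pi')"
  define m where "m = (\<lambda>r. \<integral>x. Gam x * b r x \<partial>P a)"
  have cG0: "0 \<le> cG" unfolding cG_def
    by (rule integral_nonneg_AE) (use aepi' Gb in \<open>auto elim: AE_mp\<close>)
  have Lr: "(\<integral>mu. lik mu (h @ [(a, r)]) \<partial>?pi) = cG * m r" for r
  proof -
    have "(\<integral>mu. lik mu (h @ [(a, r)]) \<partial>?pi) =
          (\<integral>y. (\<integral>x. lik (y(a := x)) (h @ [(a, r)]) \<partial>P' a) \<partial>?pi')"
      unfolding pi_eq by (rule PS.product_integral_insert[OF finI aI]) (use intlik[of r] pi_eq in simp)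
    also have "\<dots> = (\<integral>y. G y * m r \<partial>?pi')"
    proof (rule Bochner_Integration.integral_cong[OF refl])
      fix y :: "nat \<Rightarrow> real"
      have "(\<integral>x. lik (y(a := x)) (h @ [(a, r)]) \<partial>P' a) = (\<integral>x. G y * (Gam x * b r x) \<partial>P a)"
        unfolding fac2 P'a by (simp add: mult_ac)
      also have "\<dots> = G y * m r" unfolding m_def by simp
      finally show "(\<integral>x. lik (y(a := x)) (h @ [(a, r)]) \<partial>P' a) = G y * m r" .
    qed
    also have "\<dots> = cG * m r" unfolding cG_def by simp
    finally show ?thesis .
  qed
  let ?lT = "\<lambda>mu. lik mu (h @ [(a, True)])" and ?lF = "\<lambda>mu. lik mu (h @ [(a, False)])"
  let ?LT = "cG * m True" and ?LF = "cG * m False"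
  have intD: "integrable ?pi (\<lambda>mu. F mu * (?lT mu * ?LF - ?lF mu * ?LT))"
  proof -
    have "integrable ?pi (\<lambda>mu. F mu * ?lT mu * ?LF - F mu * ?lF mu * ?LT)"
      using intFlik by (intro Bochner_Integration.integrable_diff integrable_mult_left) auto
    then show ?thesis by (simp add: algebra_simps)
  qed
  have "(\<integral>mu. F mu * ?lT mu \<partial>?pi) * ?LF - (\<integral>mu. F mu * ?lF mu \<partial>?pi) * ?LT
        = (\<integral>mu. F mu * ?lT mu * ?LF - F mu * ?lF mu * ?LT \<partial>?pi)"
    using intFlik by simp
  also have "\<dots> = (\<integral>mu. F mu * (?lT mu * ?LF - ?lF mu * ?LT) \<partial>?pi)"
    by (simp add: algebra_simps)
  also have "\<dots> = (\<integral>y. (\<integral>x. F (y(a := x)) * (?lT (y(a := x)) * ?LF - ?lF (y(a := x)) * ?LT) \<partial>P' a) \<partial>?pi')"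
    unfolding pi_eq by (rule PS.product_integral_insert[OF finI aI]) (use intD pi_eq in simp)
  also have "0 \<le> \<dots>"
  proof (rule integral_nonneg_AE)
    show "AE y in ?pi'. 0 \<le> (\<integral>x. F (y(a := x)) * (?lT (y(a := x)) * ?LF - ?lF (y(a := x)) * ?LT) \<partial>P' a)"
      using aepi' AE_space
    proof eventually_elim
      case (elim y)
      then have y01: "\<forall>k\<in>I'. y k \<in> {0..1}" and ysp: "y \<in> space ?pi'" by auto
      define psi where "psi = (\<lambda>x. F (y(a := x)))"
      have psim: "psi \<in> borel_measurable (P a)"
      proof -
        have "(\<lambda>x. y(a := x)) \<in> measurable (P' a) (PiM (insert a I') P')"
          by (rule measurable_component_update[OF ysp aI])
        moreover have "F \<in> borel_measurable (PiM (insert a I') P')" using Fm pi_eq by simp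
        ultimately show ?thesis unfolding psi_def P'a[symmetric] by (rule measurable_compose)
      qed
      have psib: "\<bar>psi x\<bar> \<le> 1" if x: "x \<in> {0..1}" for x
        unfolding psi_def
      proof (rule Fb, intro allI impI)
        fix k assume "k < K"
        then show "(y(a := x)) k \<in> {0..1}" using x y01 unfolding I'_def by auto
      qed
      have psimono: "psi x \<le> psi x'" if "0 \<le> x" "x \<le> x'" "x' \<le> 1" for x x'
        unfolding psi_def using Fmono that by blast
      have pgm: "(\<lambda>x. psi x * Gam x) \<in> borel_measurable (P a)" using psim Gamm by auto
      have int1: "integrable (P a) (\<lambda>x. psi x * Gam x * x)"
      proof (rule int_bdd01[OF _ aeP, of _ 1])
        fix x :: real assume x: "x \<in> {0..1}"
        then show "\<bar>psi x * Gam x * x\<bar> \<le> 1" using psib[OF x] Gamb[OF x]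
          by (auto simp: abs_mult intro!: mult_le_one)
      qed (use pgm xmeas Pa.prob_space_axioms in auto)
      have int2: "integrable (P a) (\<lambda>x. psi x * Gam x * (1 - x))"
      proof (rule int_bdd01[OF _ aeP, of _ 1])
        fix x :: real assume x: "x \<in> {0..1}"
        then show "\<bar>psi x * Gam x * (1 - x)\<bar> \<le> 1" using psib[OF x] Gamb[OF x]
          by (auto simp: abs_mult intro!: mult_le_one)
      qed (use pgm xmeas Pa.prob_space_axioms in auto)
      have ch: "0 \<le> (\<integral>x. psi x * Gam x * x \<partial>P a) * (\<integral>x. Gam x * (1 - x) \<partial>P a)
            - (\<integral>x. psi x * Gam x * (1 - x) \<partial>P a) * (\<integral>x. Gam x * x \<partial>P a)"
        by (rule cheb[OF Pa.prob_space_axioms aeP Gamm psim xmeas Gamb psib psimono])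
      have Gy: "0 \<le> G y" using Gb[OF y01] by simp
      have "(\<integral>x. F (y(a := x)) * (?lT (y(a := x)) * ?LF - ?lF (y(a := x)) * ?LT) \<partial>P' a)
          = (\<integral>x. (G y * cG) * (m False * (psi x * Gam x * x) - m True * (psi x * Gam x * (1 - x))) \<partial>P a)"
        unfolding P'a fac2 psi_def b_def by (rule Bochner_Integration.integral_cong) (auto simp: algebra_simps)
      also have "\<dots> = (G y * cG) * (m False * (\<integral>x. psi x * Gam x * x \<partial>P a) - m True * (\<integral>x. psi x * Gam x * (1 - x) \<partial>P a))"
        using int1 int2 by simp
      also have "0 \<le> \<dots>"
      proof (rule mult_nonneg_nonneg)
        show "0 \<le> G y * cG" using Gy cG0 by simp
        show "0 \<le> m False * (\<integral>x. psi x * Gam x * x \<partial>P a) - m True * (\<integral>x. psi x * Gam x * (1 - x) \<partial>P a)"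
          using ch unfolding m_def b_def by (simp add: mult_ac)
      qed
      finally show ?case .
    qed
  qed
  finally show ?thesis unfolding Lr by simp
qed


definition Jint :: "nat \<Rightarrow> (nat \<Rightarrow> real measure) \<Rightarrow> ((nat \<Rightarrow> real) \<Rightarrow> real) \<Rightarrow> history \<Rightarrow> real" where
  "Jint K P f h = (\<integral>mu. f mu * lik mu h \<partial>prior K P)"

lemma ts_after_joint_eq:
  "ts_after_joint K P ALG n f i = (\<Sum>h\<in>histories K n. alg_prob ALG h * ts_prob K P h i * Jint K P f h)"
  unfolding ts_after_joint_def Jint_def
proof (rule sum.cong[OF refl])
  fix h
  have "(\<integral>mu. f mu * alg_prob ALG h * lik mu h * ts_prob K P h i \<partial>prior K P) =
        (\<integral>mu. (alg_prob ALG h * ts_prob K P h i) * (f mu * lik mu h) \<partial>prior K P)"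
    by (simp add: mult_ac)
  also have "\<dots> = alg_prob ALG h * ts_prob K P h i * (\<integral>mu. f mu * lik mu h \<partial>prior K P)"
    by simp
  finally show "(\<integral>mu. f mu * alg_prob ALG h * lik mu h * ts_prob K P h i \<partial>prior K P) =
        alg_prob ALG h * ts_prob K P h i * (\<integral>mu. f mu * lik mu h \<partial>prior K P)" .
qed

lemma ts_prob_eq: "ts_prob K P h i = Jint K P (\<lambda>mu. indicator {mu. best_arm K mu = i} mu) h / Jint K P (\<lambda>_. 1) h"
  unfolding ts_prob_def Jint_def by simp

lemma intJ:
  assumes vp: "valid_priors K P" and hH: "h \<in> histories K n"
    and Fm: "F \<in> borel_measurable (prior K P)"
    and Fb: "\<And>mu. \<forall>k<K. mu k \<in> {0..1} \<Longrightarrow> \<bar>F mu\<bar> \<le> 1"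
  shows "integrable (prior K P) (\<lambda>mu. F mu * lik mu h)"
proof -
  interpret pi: prob_space "prior K P" by (rule prior_prob[OF vp])
  show ?thesis
  proof (rule pi.integrable_const_bound[where B=1])
    show "AE mu in prior K P. norm (F mu * lik mu h) \<le> 1"
      using AE_prior01[OF vp]
    proof (rule AE_mp, intro AE_I2 impI)
      fix mu :: "nat \<Rightarrow> real" assume "\<forall>k<K. mu k \<in> {0..1}"
      then show "norm (F mu * lik mu h) \<le> 1" using Fb[of mu] lik_bounds[of K mu h n] hH
        by (auto simp: abs_mult intro: mult_le_one)
    qed
  qed (use Fm lik_meas[OF vp hH] in auto)
qed

lemma J_mono:
  assumes vp: "valid_priors K P" and hH: "h \<in> histories K n"
    and Fm: "F \<in> borel_measurable (prior K P)" and Gm: "G \<in> borel_measurable (prior K P)"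
    and Fb: "\<And>mu. \<forall>k<K. mu k \<in> {0..1} \<Longrightarrow> \<bar>F mu\<bar> \<le> 1"
    and Gb: "\<And>mu. \<forall>k<K. mu k \<in> {0..1} \<Longrightarrow> \<bar>G mu\<bar> \<le> 1"
    and le: "\<And>mu. \<forall>k<K. mu k \<in> {0..1} \<Longrightarrow> F mu \<le> G mu"
  shows "Jint K P F h \<le> Jint K P G h"
  unfolding Jint_def
proof (rule integral_mono_AE[OF intJ[OF vp hH Fm Fb] intJ[OF vp hH Gm Gb]])
  show "AE mu in prior K P. F mu * lik mu h \<le> G mu * lik mu h"
    using AE_prior01[OF vp]
  proof (rule AE_mp, intro AE_I2 impI)
    fix mu :: "nat \<Rightarrow> real" assume "\<forall>k<K. mu k \<in> {0..1}"
    then show "F mu * lik mu h \<le> G mu * lik mu h" using le[of mu] lik_bounds[of K mu h n] hH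
      by (auto intro: mult_right_mono)
  qed
qed

lemma J_split:
  assumes vp: "valid_priors K P" and hH: "h \<in> histories K n" and aK: "a < K"
    and Fm: "F \<in> borel_measurable (prior K P)"
    and Fb: "\<And>mu. \<forall>k<K. mu k \<in> {0..1} \<Longrightarrow> \<bar>F mu\<bar> \<le> 1"
  shows "Jint K P F (h @ [(a, True)]) + Jint K P F (h @ [(a, False)]) = Jint K P F h"
proof -
  have hr: "h @ [(a, r)] \<in> histories K (Suc n)" for r using hH aK unfolding histories_def by auto
  have "Jint K P F (h @ [(a, True)]) + Jint K P F (h @ [(a, False)]) =
        (\<integral>mu. F mu * lik mu (h @ [(a, True)]) + F mu * lik mu (h @ [(a, False)]) \<partial>prior K P)"
    unfolding Jint_def using intJ[OF vp hr Fm Fb] by simp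
  also have "\<dots> = Jint K P F h"
    unfolding Jint_def lik_snoc by (rule Bochner_Integration.integral_cong) (auto simp: algebra_simps)
  finally show ?thesis .
qed

lemma alg_ineq:
  fixes L0 L1 I0 I1 D0 D1 :: real
  assumes "0 \<le> I0" "I0 \<le> L0" "0 \<le> I1" "I1 \<le> L1" "\<bar>D0\<bar> \<le> L0" "\<bar>D1\<bar> \<le> L1"
    and cov: "0 \<le> (D1 * L0 - D0 * L1) * (I1 * L0 - I0 * L1)"
  shows "(I0 + I1) / (L0 + L1) * (D0 + D1) \<le> I1 / L1 * D1 + I0 / L0 * D0"
proof -
  consider "L0 = 0" | "L1 = 0" | "0 < L0" "0 < L1" using assms by fastforce
  then show ?thesis
  proof cases
    case 1
    then have "I0 = 0" "D0 = 0" using assms by auto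
    then show ?thesis using 1 by simp
  next
    case 2
    then have "I1 = 0" "D1 = 0" using assms by auto
    then show ?thesis using 2 by simp
  next
    case 3
    have "I1 / L1 * D1 + I0 / L0 * D0 - (I0 + I1) / (L0 + L1) * (D0 + D1) =
          (D1 * L0 - D0 * L1) * (I1 * L0 - I0 * L1) / (L0 * L1 * (L0 + L1))"
      using 3 by (simp add: field_simps)
    also have "\<dots> \<ge> 0" using cov 3 by simp
    finally show ?thesis by simp
  qed
qed


lemma cov_neg:
  fixes F :: "(nat \<Rightarrow> real) \<Rightarrow> real"
  assumes vp: "valid_priors K P" and aK: "a < K" and hH: "h \<in> histories K n"
    and Fm: "F \<in> borel_measurable (prior K P)"
    and Fb: "\<And>mu. \<forall>k<K. mu k \<in> {0..1} \<Longrightarrow> \<bar>F mu\<bar> \<le> 1"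
    and Fmono: "\<And>mu x x'. 0 \<le> x \<Longrightarrow> x \<le> x' \<Longrightarrow> x' \<le> 1 \<Longrightarrow> F (mu(a := x')) \<le> F (mu(a := x))"
  shows "Jint K P F (h @ [(a, True)]) * Jint K P (\<lambda>_. 1) (h @ [(a, False)])
           - Jint K P F (h @ [(a, False)]) * Jint K P (\<lambda>_. 1) (h @ [(a, True)]) \<le> 0"
proof -
  have "0 \<le> (\<integral>mu. - F mu * lik mu (h @ [(a, True)]) \<partial>prior K P) * (\<integral>mu. lik mu (h @ [(a, False)]) \<partial>prior K P)
           - (\<integral>mu. - F mu * lik mu (h @ [(a, False)]) \<partial>prior K P) * (\<integral>mu. lik mu (h @ [(a, True)]) \<partial>prior K P)"
    by (rule cov_mono[OF vp aK hH]) (use Fm Fb Fmono in auto)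
  then show ?thesis unfolding Jint_def by simp
qed

lemma cov_pos:
  fixes F :: "(nat \<Rightarrow> real) \<Rightarrow> real"
  assumes vp: "valid_priors K P" and aK: "a < K" and hH: "h \<in> histories K n"
    and Fm: "F \<in> borel_measurable (prior K P)"
    and Fb: "\<And>mu. \<forall>k<K. mu k \<in> {0..1} \<Longrightarrow> \<bar>F mu\<bar> \<le> 1"
    and Fmono: "\<And>mu x x'. 0 \<le> x \<Longrightarrow> x \<le> x' \<Longrightarrow> x' \<le> 1 \<Longrightarrow> F (mu(a := x)) \<le> F (mu(a := x'))"
  shows "0 \<le> Jint K P F (h @ [(a, True)]) * Jint K P (\<lambda>_. 1) (h @ [(a, False)])
           - Jint K P F (h @ [(a, False)]) * Jint K P (\<lambda>_. 1) (h @ [(a, True)])"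
  using cov_mono[OF vp aK hH Fm Fb Fmono] unfolding Jint_def by simp

lemma sign_prod:
  assumes vp: "valid_priors K P" and aK: "a < K" and hH: "h \<in> histories K n"
    and iK: "i < K" and jK: "j < K"
  defines "FD \<equiv> (\<lambda>mu::nat \<Rightarrow> real. mu i - mu j)"
    and "FI \<equiv> (\<lambda>mu::nat \<Rightarrow> real. indicator {mu. best_arm K mu = i} mu :: real)"
  shows "0 \<le> (Jint K P FD (h @ [(a, True)]) * Jint K P (\<lambda>_. 1) (h @ [(a, False)])
           - Jint K P FD (h @ [(a, False)]) * Jint K P (\<lambda>_. 1) (h @ [(a, True)])) *
             (Jint K P FI (h @ [(a, True)]) * Jint K P (\<lambda>_. 1) (h @ [(a, False)])
           - Jint K P FI (h @ [(a, False)]) * Jint K P (\<lambda>_. 1) (h @ [(a, True)]))"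
proof -
  have FDm: "FD \<in> borel_measurable (prior K P)"
    unfolding FD_def using prior_comp_meas[OF vp iK] prior_comp_meas[OF vp jK] by auto
  have FDb: "\<bar>FD mu\<bar> \<le> 1" if "\<forall>k<K. mu k \<in> {0..1}" for mu
  proof -
    have "mu i \<in> {0..1}" "mu j \<in> {0..1}" using that iK jK by auto
    then show ?thesis unfolding FD_def by (auto simp: abs_le_iff)
  qed
  have FIm: "FI \<in> borel_measurable (prior K P)" unfolding FI_def by (rule ind_meas[OF vp iK])
  have FIb: "\<bar>FI mu\<bar> \<le> 1" for mu unfolding FI_def by (auto simp: indicator_def)
  let ?CD = "Jint K P FD (h @ [(a, True)]) * Jint K P (\<lambda>_. 1) (h @ [(a, False)])
           - Jint K P FD (h @ [(a, False)]) * Jint K P (\<lambda>_. 1) (h @ [(a, True)])"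
  let ?CI = "Jint K P FI (h @ [(a, True)]) * Jint K P (\<lambda>_. 1) (h @ [(a, False)])
           - Jint K P FI (h @ [(a, False)]) * Jint K P (\<lambda>_. 1) (h @ [(a, True)])"
  consider "i = j \<or> (a \<noteq> i \<and> a \<noteq> j)" | "a = i" "i \<noteq> j" | "a = j" "i \<noteq> j" by blast
  then show ?thesis
  proof cases
    case 1
    have c: "FD (mu(a := x)) = FD (mu(a := x'))" for mu x x' using 1 unfolding FD_def by auto
    have "0 \<le> ?CD"
    proof (rule cov_pos[OF vp aK hH FDm FDb])
      fix mu :: "nat \<Rightarrow> real" and x x' :: real
      show "FD (mu(a := x)) \<le> FD (mu(a := x'))" using c[of mu x x'] by simp
    qed
    moreover have "?CD \<le> 0"
    proof (rule cov_neg[OF vp aK hH FDm FDb])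
      fix mu :: "nat \<Rightarrow> real" and x x' :: real
      show "FD (mu(a := x')) \<le> FD (mu(a := x))" using c[of mu x x'] by simp
    qed
    ultimately have "?CD = 0" by linarith
    then show ?thesis by simp
  next
    case 2
    have "0 \<le> ?CD" by (rule cov_pos[OF vp aK hH FDm FDb]) (use 2 in \<open>auto simp: FD_def\<close>)
    moreover have "0 \<le> ?CI"
    proof (rule cov_pos[OF vp aK hH FIm FIb])
      fix mu :: "nat \<Rightarrow> real" and x x' :: real assume xx: "0 \<le> x" "x \<le> x'" "x' \<le> 1"
      show "FI (mu(a := x)) \<le> FI (mu(a := x'))"
      proof (cases "best_arm K (mu(a := x)) = i")
        case True
        then have "best_arm K (mu(a := x')) = i"
          using best_arm_iff[OF iK, of "mu(a := x)"] best_arm_iff[OF iK, of "mu(a := x')"] 2 xx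
          by (auto split: if_splits)
        then show ?thesis unfolding FI_def by simp
      next
        case False
        then show ?thesis unfolding FI_def by (simp add: indicator_def)
      qed
    qed
    ultimately show ?thesis by simp
  next
    case 3
    have "?CD \<le> 0" by (rule cov_neg[OF vp aK hH FDm FDb]) (use 3 in \<open>auto simp: FD_def\<close>)
    moreover have "?CI \<le> 0"
    proof (rule cov_neg[OF vp aK hH FIm FIb])
      fix mu :: "nat \<Rightarrow> real" and x x' :: real assume xx: "0 \<le> x" "x \<le> x'" "x' \<le> 1"
      show "FI (mu(a := x')) \<le> FI (mu(a := x))"
      proof (cases "best_arm K (mu(a := x')) = i")
        case True
        then have "best_arm K (mu(a := x)) = i"
          using best_arm_iff[OF iK, of "mu(a := x)"] best_arm_iff[OF iK, of "mu(a := x')"] 3 xx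
          by (auto split: if_splits)
        then show ?thesis unfolding FI_def by simp
      next
        case False
        then show ?thesis unfolding FI_def by (simp add: indicator_def)
      qed
    qed
    ultimately show ?thesis by (simp add: mult_nonpos_nonpos)
  qed
qed


lemma J_bounds:
  assumes vp: "valid_priors K P" and hH: "h \<in> histories K n" and iK: "i < K" and jK: "j < K"
  shows "0 \<le> Jint K P (\<lambda>mu. indicator {mu. best_arm K mu = i} mu) h"
    and "Jint K P (\<lambda>mu. indicator {mu. best_arm K mu = i} mu) h \<le> Jint K P (\<lambda>_. 1) h"
    and "\<bar>Jint K P (\<lambda>mu. mu i - mu j) h\<bar> \<le> Jint K P (\<lambda>_. 1) h"
proof -
  have FDm: "(\<lambda>mu::nat\<Rightarrow>real. mu i - mu j) \<in> borel_measurable (prior K P)"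
    using prior_comp_meas[OF vp iK] prior_comp_meas[OF vp jK] by auto
  have FDb: "\<bar>mu i - mu j\<bar> \<le> 1" "- 1 \<le> mu i - mu j" "mu i - mu j \<le> 1" if "\<forall>k<K. mu k \<in> {0..1}" for mu :: "nat \<Rightarrow> real"
  proof -
    have "mu i \<in> {0..1}" "mu j \<in> {0..1}" using that iK jK by auto
    then show "\<bar>mu i - mu j\<bar> \<le> 1" "- 1 \<le> mu i - mu j" "mu i - mu j \<le> 1" by (auto simp: abs_le_iff)
  qed
  have FIm: "(\<lambda>mu. indicator {mu. best_arm K mu = i} mu :: real) \<in> borel_measurable (prior K P)"
    by (rule ind_meas[OF vp iK])
  have z: "Jint K P (\<lambda>_. 0) h = 0" unfolding Jint_def by simp
  have m1: "Jint K P (\<lambda>_. - 1) h = - Jint K P (\<lambda>_. 1) h" unfolding Jint_def by simp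
  show "0 \<le> Jint K P (\<lambda>mu. indicator {mu. best_arm K mu = i} mu) h"
    using J_mono[OF vp hH _ FIm, of "\<lambda>_. 0"] z by (auto simp: indicator_def)
  show "Jint K P (\<lambda>mu. indicator {mu. best_arm K mu = i} mu) h \<le> Jint K P (\<lambda>_. 1) h"
    using J_mono[OF vp hH FIm, of "\<lambda>_. 1"] by (auto simp: indicator_def)
  have "Jint K P (\<lambda>mu. mu i - mu j) h \<le> Jint K P (\<lambda>_. 1) h"
    using J_mono[OF vp hH FDm, of "\<lambda>_. 1"] FDb by auto
  moreover have "Jint K P (\<lambda>_. - 1) h \<le> Jint K P (\<lambda>mu. mu i - mu j) h"
    using J_mono[OF vp hH _ FDm, of "\<lambda>_. - 1"] FDb by auto
  ultimately show "\<bar>Jint K P (\<lambda>mu. mu i - mu j) h\<bar> \<le> Jint K P (\<lambda>_. 1) h" unfolding m1 by auto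
qed

lemma ts_times_L:
  assumes vp: "valid_priors K P" and hH: "h \<in> histories K n" and iK: "i < K"
  shows "ts_prob K P h i * Jint K P (\<lambda>_. 1) h = Jint K P (\<lambda>mu. indicator {mu. best_arm K mu = i} mu) h"
  using J_bounds(1,2)[OF vp hH iK iK] unfolding ts_prob_eq by (cases "Jint K P (\<lambda>_. 1) h = 0") auto

lemma den_eq:
  assumes vp: "valid_priors K P" and va: "valid_alg K ALG" and iK: "i < K"
  shows "ts_after_joint K P ALG (Suc n) (\<lambda>_. 1) i = ts_after_joint K P ALG n (\<lambda>_. 1) i"
proof -
  let ?I = "Jint K P (\<lambda>mu. indicator {mu. best_arm K mu = i} mu)"
  have FIm: "(\<lambda>mu. indicator {mu. best_arm K mu = i} mu :: real) \<in> borel_measurable (prior K P)"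
    by (rule ind_meas[OF vp iK])
  have D: "ts_after_joint K P ALG m (\<lambda>_. 1) i = (\<Sum>h\<in>histories K m. alg_prob ALG h * ?I h)" for m
    unfolding ts_after_joint_eq
    by (rule sum.cong[OF refl]) (use ts_times_L[OF vp _ iK] in \<open>simp add: mult.assoc\<close>)
  have p1: "(\<Sum>a<K. pmf (ALG h) a) = 1" for h
    using va unfolding valid_alg_def by (intro sum_pmf_eq_1) auto
  have "(\<Sum>h\<in>histories K (Suc n). alg_prob ALG h * ?I h) =
        (\<Sum>h\<in>histories K n. \<Sum>a<K. alg_prob ALG h * pmf (ALG h) a * (?I (h @ [(a, True)]) + ?I (h @ [(a, False)])))"
    unfolding sum_histories_Suc alg_prob_snoc by (simp add: algebra_simps)
  also have "\<dots> = (\<Sum>h\<in>histories K n. \<Sum>a<K. alg_prob ALG h * ?I h * pmf (ALG h) a)"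
  proof (intro sum.cong refl)
    fix h a assume h: "h \<in> histories K n" and a: "a \<in> {..<K}"
    have "?I (h @ [(a, True)]) + ?I (h @ [(a, False)]) = ?I h"
      by (rule J_split[OF vp h _ FIm]) (use a in \<open>auto simp: indicator_def\<close>)
    then show "alg_prob ALG h * pmf (ALG h) a * (?I (h @ [(a, True)]) + ?I (h @ [(a, False)])) =
               alg_prob ALG h * ?I h * pmf (ALG h) a" by simp
  qed
  also have "\<dots> = (\<Sum>h\<in>histories K n. alg_prob ALG h * ?I h)"
    by (simp add: sum_distrib_left[symmetric] p1)
  finally show ?thesis unfolding D .
qed

lemma num_mono:
  assumes vp: "valid_priors K P" and va: "valid_alg K ALG" and iK: "i < K" and jK: "j < K"
  shows "ts_after_joint K P ALG n (\<lambda>mu. mu i - mu j) i \<le> ts_after_joint K P ALG (Suc n) (\<lambda>mu. mu i - mu j) i"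
proof -
  let ?I = "Jint K P (\<lambda>mu. indicator {mu. best_arm K mu = i} mu)"
  let ?D = "Jint K P (\<lambda>mu. mu i - mu j)"
  let ?L = "Jint K P (\<lambda>_. 1)"
  let ?ts = "\<lambda>h. ts_prob K P h i"
  have FIm: "(\<lambda>mu. indicator {mu. best_arm K mu = i} mu :: real) \<in> borel_measurable (prior K P)"
    by (rule ind_meas[OF vp iK])
  have FDm: "(\<lambda>mu::nat\<Rightarrow>real. mu i - mu j) \<in> borel_measurable (prior K P)"
    using prior_comp_meas[OF vp iK] prior_comp_meas[OF vp jK] by auto
  have FDb: "\<bar>mu i - mu j\<bar> \<le> 1" if "\<forall>k<K. mu k \<in> {0..1}" for mu :: "nat \<Rightarrow> real"
  proof -
    have "mu i \<in> {0..1}" "mu j \<in> {0..1}" using that iK jK by auto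
    then show ?thesis by (auto simp: abs_le_iff)
  qed
  have p1: "(\<Sum>a<K. pmf (ALG h) a) = 1" for h
    using va unfolding valid_alg_def by (intro sum_pmf_eq_1) auto
  have wnn: "0 \<le> alg_prob ALG h" for h unfolding alg_prob_def by (intro prod_nonneg) auto
  have "ts_after_joint K P ALG n (\<lambda>mu. mu i - mu j) i =
        (\<Sum>h\<in>histories K n. \<Sum>a<K. alg_prob ALG h * pmf (ALG h) a * (?ts h * ?D h))"
    unfolding ts_after_joint_eq
    by (rule sum.cong[OF refl]) (simp add: sum_distrib_left[symmetric] sum_distrib_right[symmetric] p1)
  also have "\<dots> \<le> (\<Sum>h\<in>histories K n. \<Sum>a<K. alg_prob ALG h * pmf (ALG h) a *
                    (?ts (h @ [(a, True)]) * ?D (h @ [(a, True)]) + ?ts (h @ [(a, False)]) * ?D (h @ [(a, False)])))"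
  proof (intro sum_mono mult_left_mono)
    fix h a assume h: "h \<in> histories K n" and a: "a \<in> {..<K}"
    show "0 \<le> alg_prob ALG h * pmf (ALG h) a" using wnn by simp
    have hr: "h @ [(a, r)] \<in> histories K (Suc n)" for r using h a unfolding histories_def by auto
    have sI: "?I (h @ [(a, True)]) + ?I (h @ [(a, False)]) = ?I h"
      by (rule J_split[OF vp h _ FIm]) (use a in \<open>auto simp: indicator_def\<close>)
    have sD: "?D (h @ [(a, True)]) + ?D (h @ [(a, False)]) = ?D h"
      by (rule J_split[OF vp h _ FDm FDb]) (use a in auto)
    have sL: "?L (h @ [(a, True)]) + ?L (h @ [(a, False)]) = ?L h"
      by (rule J_split[OF vp h]) (use a in auto)
    have "(?I (h @ [(a, False)]) + ?I (h @ [(a, True)])) / (?L (h @ [(a, False)]) + ?L (h @ [(a, True)])) *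
            (?D (h @ [(a, False)]) + ?D (h @ [(a, True)]))
          \<le> ?I (h @ [(a, True)]) / ?L (h @ [(a, True)]) * ?D (h @ [(a, True)]) +
            ?I (h @ [(a, False)]) / ?L (h @ [(a, False)]) * ?D (h @ [(a, False)])"
      by (rule alg_ineq[OF J_bounds(1,2)[OF vp hr iK jK] J_bounds(1,2)[OF vp hr iK jK]
                         J_bounds(3)[OF vp hr iK jK] J_bounds(3)[OF vp hr iK jK]])
         (rule sign_prod[OF vp _ h iK jK], use a in auto)
    then show "?ts h * ?D h \<le> ?ts (h @ [(a, True)]) * ?D (h @ [(a, True)]) + ?ts (h @ [(a, False)]) * ?D (h @ [(a, False)])"
      unfolding ts_prob_eq sI[symmetric] sD[symmetric] sL[symmetric] by (simp add: add.commute)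
  qed
  also have "\<dots> = ts_after_joint K P ALG (Suc n) (\<lambda>mu. mu i - mu j) i"
    unfolding ts_after_joint_eq sum_histories_Suc alg_prob_snoc by (simp add: algebra_simps)
  finally show ?thesis .
qed

theorem lemma3p7:
  fixes K t :: nat and P :: "nat \<Rightarrow> real measure" and ALG :: algorithm
  assumes "valid_priors K P"
    and "valid_alg K ALG"
    and "1 \<le> t"
    and "bic_ts_after K P ALG (t - 1)"
  shows "bic_ts_after K P ALG t"
proof -
  obtain n where t: "t = Suc n" using assms(3) by (cases t) auto
  have hyp: "bic_ts_after K P ALG n" using assms(4) t by simp
  show ?thesis unfolding bic_ts_after_def t
  proof (intro allI impI)
    fix i j assume iK: "i < K" and jK: "j < K"
      and pos: "0 < ts_after_joint K P ALG (Suc n) (\<lambda>_. 1) i"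
    have pos': "0 < ts_after_joint K P ALG n (\<lambda>_. 1) i"
      using pos den_eq[OF assms(1,2) iK] by simp
    then have "0 \<le> ts_after_joint K P ALG n (\<lambda>mu. mu i - mu j) i / ts_after_joint K P ALG n (\<lambda>_. 1) i"
      using hyp iK jK unfolding bic_ts_after_def by blast
    then have "0 \<le> ts_after_joint K P ALG n (\<lambda>mu. mu i - mu j) i"
      using pos' by (simp add: zero_le_divide_iff)
    then have "0 \<le> ts_after_joint K P ALG (Suc n) (\<lambda>mu. mu i - mu j) i"
      using num_mono[OF assms(1,2) iK jK, of n] by linarith
    then show "0 \<le> ts_after_joint K P ALG (Suc n) (\<lambda>mu. mu i - mu j) i / ts_after_joint K P ALG (Suc n) (\<lambda>_. 1) i"
      using pos by simp
  qed
qed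

end
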